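(* Let $I\ge1$, $\varphi\ge0$, $\psi\in(0,\infty)^I$, $\boldsymbol\lambda=(\boldsymbol\lambda^{ji})\in(0,\infty)^{I\times I}$ with $\psi^i+\sum_j\boldsymbol\lambda^{ji}=1$ for all $i$. Let $\overline\delta\ge0$, $\overline\tau\in\mathbb R_+^I$ with $\overline\delta\max_i\overline\tau^i<1$, $\overline\zeta\in\mathbb R_+^{I\times I}$, $\overline\kappa\in\mathbb R_+^I$, and define $$\Psi^i:=\psi^i\frac{1-\overline\tau^i\overline\delta}{1+\overline\kappa^i\overline\delta},\qquad \Lambda^{ji}:=\boldsymbol\lambda^{ji}\frac{1-\overline\tau^i\overline\delta}{1+\overline\zeta^{ji}\overline\delta}\,\frac{1+\overline\kappa^j\overline\delta}{1+\overline\kappa^i\overline\delta}.$$ Let $A\in(0,\infty)^I$ and consider the system, for $(C,Y)\in(0,\infty)^I\times(0,\infty)^I$ and all $i$, $$Y^i=C^i+\sum_{j}\Lambda^{ij}\frac{C^i}{C^j}Y^j,\qquad Y^i=A^i\Big[\Psi^i\frac{Y^i}{C^i}\Big]^{\frac{\psi^i}{1+\varphi}}\prod_{j}\Big[\Lambda^{ji}C^j\frac{Y^i}{C^i}\Big]^{\boldsymbol\lambda^{ji}}.$$ Assume that the matrix $(\delta_{ij}-\Lambda^{ij})_{i,j}$ is nonsingular and that the unique vector $\mathfrak e\in\mathbb R^I$ with $\mathfrak e^i=1+\sum_j\Lambda^{ij}\mathfrak e^j$ for all $i$ has positive entries, and that the matrix $N:=(\delta_{ij}-\boldsymbol\lambda^{ji})_{i,j}$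 is nonsingular. Then the system has a unique solution $(C,Y)\in(0,\infty)^I\times(0,\infty)^I$; it satisfies $Y^i/C^i=\mathfrak e^i$ for all $i$, $$(\log C^i)_{i}=N^{-1}\big(\log A^i+\mathfrak v^i\big)_{i},\qquad \log Y^i=\log C^i+\log\mathfrak e^i,$$ where $\mathfrak v^i:=-\frac{\varphi\psi^i}{1+\varphi}\log\mathfrak e^i+\frac{\psi^i}{1+\varphi}\log\Psi^i+\sum_j\boldsymbol\lambda^{ji}\log\Lambda^{ji}$.
   Context: $\delta_{ij}$ is the Kronecker delta. The system is the market-equilibrium system of a multisectoral economy with logarithmic utility of consumption; $C^i$ is household consumption of good $i$, $Y^i$ output of sector $i$, $A^i$ total factor productivity of sector $i$. *)

theory Defs
  imports "HOL-Analysis.Analysis"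
begin

text \<open>Indices range over a finite type 'n (so I = CARD('n) >= 1).
  Vectors are real^'n, matrices real^'n^'n with M $ i $ j the (i,j) entry.\<close>

definition PsiC :: "(real^'n) \<Rightarrow> real \<Rightarrow> real^'n \<Rightarrow> real^'n \<Rightarrow> 'n \<Rightarrow> real" where
  "PsiC psi dbar taubar kappabar i =
     psi $ i * (1 - taubar $ i * dbar) / (1 + kappabar $ i * dbar)"

text \<open>LambdaC lam ... j i is the paper's Lambda^{ji}; lam $ j $ i is lambda^{ji}.\<close>
definition LambdaC :: "(real^'n^'n) \<Rightarrow> real \<Rightarrow> real^'n \<Rightarrow> real^'n^'n \<Rightarrow> real^'n \<Rightarrow> 'n \<Rightarrow> 'n \<Rightarrow> real" where
  "LambdaC lam dbar taubar zetabar kappabar j i =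
     lam $ j $ i * (1 - taubar $ i * dbar) / (1 + zetabar $ j $ i * dbar)
       * ((1 + kappabar $ j * dbar) / (1 + kappabar $ i * dbar))"

end

theory Submission
  imports Defs
begin

lemma minv:
  fixes A :: "real^'n^'n"
  assumes "invertible A"
  shows "A ** matrix_inv A = mat 1 \<and> matrix_inv A ** A = mat 1"
  using assms unfolding invertible_def matrix_inv_def by (rule someI_ex)

lemma minv_solve:
  fixes A :: "real^'n^'n"
  assumes "invertible A"
  shows "A *v x = b \<longleftrightarrow> x = matrix_inv A *v b"
proof
  assume "A *v x = b"
  then have "matrix_inv A *v b = (matrix_inv A ** A) *v x"
    by (metis matrix_vector_mul_assoc)
  then show "x = matrix_inv A *v b" using minv[OF assms] by simp
next
  assume "x = matrix_inv A *v b"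
  then have "A *v x = (A ** matrix_inv A) *v b"
    by (metis matrix_vector_mul_assoc)
  then show "A *v x = b" using minv[OF assms] by simp
qed

lemma mv_delta:
  fixes x :: "real^'n"
  shows "((\<chi> i j. (if i = j then 1 else 0) - L i j) *v x) $ i = x $ i - (\<Sum>j\<in>UNIV. L i j * x $ j)"
proof -
  have "((\<chi> i j. (if i = j then 1 else 0) - L i j) *v x) $ i
      = (\<Sum>j\<in>UNIV. (if i = j then x $ j else 0) - L i j * x $ j)"
    unfolding matrix_vector_mult_def by (simp, intro sum.cong) (auto simp: left_diff_distrib)
  also have "\<dots> = x $ i - (\<Sum>j\<in>UNIV. L i j * x $ j)"
    by (simp add: sum_subtractf)
  finally show ?thesis .
qed

lemma second_eq_iff:
  fixes c :: "'n::finite \<Rightarrow> real" and l Lam :: "'n \<Rightarrow> real"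
  assumes A: "A > 0" and P: "Psi > 0" and e: "e > 0" and L: "\<forall>j. Lam j > 0"
    and c: "\<forall>j. c j > 0" and s: "psi + (\<Sum>j\<in>UNIV. l j) = 1" and ph: "varphi \<ge> 0"
  shows "(c i * e = A * (Psi * e) powr (psi / (1 + varphi))
            * (\<Prod>j\<in>UNIV. (Lam j * c j * e) powr (l j)))
    \<longleftrightarrow> ln (c i) - (\<Sum>j\<in>UNIV. l j * ln (c j)) =
        ln A + (- (varphi * psi / (1 + varphi)) * ln e + (psi / (1 + varphi)) * ln Psi
                   + (\<Sum>j\<in>UNIV. l j * ln (Lam j)))"
proof -
  let ?R = "A * (Psi * e) powr (psi / (1 + varphi)) * (\<Prod>j\<in>UNIV. (Lam j * c j * e) powr (l j))"
  have pj: "\<And>j. (Lam j * c j * e) > 0" using L c e by simp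
  have Rpos: "?R > 0" using A P e pj L c
    by (intro mult_pos_pos prod_pos) (auto simp: less_imp_neq[symmetric])
  have lhpos: "c i * e > 0" using c e by simp
  have "(c i * e = ?R) \<longleftrightarrow> ln (c i * e) = ln ?R"
    using Rpos lhpos by simp
  also have "ln ?R = ln A + (psi / (1 + varphi)) * (ln Psi + ln e)
       + (\<Sum>j\<in>UNIV. l j * (ln (Lam j) + ln (c j) + ln e))"
  proof -
    have "ln ?R = ln A + ln ((Psi * e) powr (psi / (1 + varphi)))
          + ln (\<Prod>j\<in>UNIV. (Lam j * c j * e) powr (l j))"
      using A P e pj L c Rpos
      by (subst ln_mult_pos, force, intro prod_pos, simp add: less_imp_neq[symmetric],
          subst ln_mult_pos, auto)
    also have "ln (\<Prod>j\<in>UNIV. (Lam j * c j * e) powr (l j))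
        = (\<Sum>j\<in>UNIV. l j * ln (Lam j * c j * e))"
      using pj L c e by (subst ln_prod) (auto simp: less_imp_neq[symmetric])
    finally show ?thesis using P e L c
      by (simp add: ln_mult_pos)
  qed
  also have "(\<Sum>j\<in>UNIV. l j * (ln (Lam j) + ln (c j) + ln e))
     = (\<Sum>j\<in>UNIV. l j * ln (Lam j)) + (\<Sum>j\<in>UNIV. l j * ln (c j)) + (1 - psi) * ln e"
    using s by (simp add: distrib_left sum.distrib sum_distrib_right[symmetric])
  also have "ln (c i * e) = ln (c i) + ln e" using c e by (simp add: ln_mult_pos)
  finally have eq: "(c i * e = ?R) \<longleftrightarrow> ln (c i) + ln e = ln A + psi / (1 + varphi) * (ln Psi + ln e) +
    ((\<Sum>j\<in>UNIV. l j * ln (Lam j)) + (\<Sum>j\<in>UNIV. l j * ln (c j)) + (1 - psi) * ln e)" .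
  have k: "- (varphi * psi / (1 + varphi)) * ln e = psi / (1 + varphi) * ln e - psi * ln e"
    using ph by (simp add: field_simps)
  define a where "a = psi / (1 + varphi)"
  have k2: "varphi * psi / (1 + varphi) = psi - a"
    using ph unfolding a_def by (simp add: field_simps)
  let ?SL = "\<Sum>j\<in>UNIV. l j * ln (Lam j)" and ?Sc = "\<Sum>j\<in>UNIV. l j * ln (c j)"
  have d: "(ln (c i) + ln e) - (ln A + a * (ln Psi + ln e) + (?SL + ?Sc + (1 - psi) * ln e))
      = (ln (c i) - ?Sc) - (ln A + (- (psi - a) * ln e + a * ln Psi + ?SL))"
    by (simp add: algebra_simps)
  have fin: "(ln (c i) + ln e = ln A + a * (ln Psi + ln e) + (?SL + ?Sc + (1 - psi) * ln e)) =
      (ln (c i) - ?Sc = ln A + (- (psi - a) * ln e + a * ln Psi + ?SL))"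
    using d by linarith
  note eq' = eq[unfolded a_def[symmetric]]
  show ?thesis unfolding k2 a_def[symmetric] eq' by (rule fin)
qed

lemma first_eq_iff:
  fixes C Y :: "real^'n"
  assumes C: "\<forall>i. C $ i > 0"
  shows "(\<forall>i. Y $ i = C $ i + (\<Sum>j\<in>UNIV. L i j * (C $ i / C $ j) * Y $ j)) \<longleftrightarrow>
         (\<chi> i j. (if i = j then 1 else 0) - L i j) *v (\<chi> i. Y $ i / C $ i) = (\<chi> i. 1)"
proof -
  have "(Y $ i = C $ i + (\<Sum>j\<in>UNIV. L i j * (C $ i / C $ j) * Y $ j)) \<longleftrightarrow>
        Y $ i / C $ i - (\<Sum>j\<in>UNIV. L i j * (Y $ j / C $ j)) = 1" for i
  proof -
    have s: "(\<Sum>j\<in>UNIV. L i j * (C $ i / C $ j) * Y $ j) = C $ i * (\<Sum>j\<in>UNIV. L i j * (Y $ j / C $ j))"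
      unfolding sum_distrib_left by (intro sum.cong refl) simp
    have ci: "C $ i > 0" using C by auto
    show ?thesis unfolding s using ci by (simp add: field_simps) (rule eq_commute)
  qed
  then show ?thesis by (simp add: vec_eq_iff mv_delta)
qed

lemma core:
  fixes varphi :: real and psi A :: "real^'n" and lam :: "real^'n^'n"
    and Psi :: "'n \<Rightarrow> real" and Lam :: "'n \<Rightarrow> 'n \<Rightarrow> real"
  assumes varphi: "varphi \<ge> 0"
    and psi_pos: "\<forall>i. psi $ i > 0"
    and lam_pos: "\<forall>i j. lam $ j $ i > 0"
    and sum_one: "\<forall>i. psi $ i + (\<Sum>j\<in>UNIV. lam $ j $ i) = 1"
    and A_pos: "\<forall>i. A $ i > 0"
    and Psi_pos: "\<forall>i. Psi i > 0"
    and Lam_pos: "\<forall>i j. Lam i j > 0"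
    and M_inv: "invertible (\<chi> i j. (if i = j then 1 else 0) - Lam i j)"
    and e_pos: "\<forall>i. (matrix_inv (\<chi> i j. (if i = j then 1 else 0) - Lam i j) *v (\<chi> i. 1)) $ i > 0"
    and N_inv: "invertible (\<chi> i j. (if i = j then 1 else 0) - lam $ j $ i)"
  shows
    "let e = matrix_inv (\<chi> i j. (if i = j then 1 else 0) - Lam i j) *v (\<chi> i. 1);
         N = (\<chi> i j. (if i = j then 1 else 0) - lam $ j $ i :: real^'n^'n);
         v = (\<chi> i. - (varphi * psi $ i / (1 + varphi)) * ln (e $ i)
                   + (psi $ i / (1 + varphi)) * ln (Psi i)
                   + (\<Sum>j\<in>UNIV. lam $ j $ i * ln (Lam j i)));
         sys = (\<lambda>(C::real^'n) (Y::real^'n).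
                  (\<forall>i. C $ i > 0 \<and> Y $ i > 0) \<and>
                  (\<forall>i. Y $ i = C $ i + (\<Sum>j\<in>UNIV. Lam i j * (C $ i / C $ j) * Y $ j)) \<and>
                  (\<forall>i. Y $ i = A $ i * (Psi i * (Y $ i / C $ i)) powr (psi $ i / (1 + varphi))
                        * (\<Prod>j\<in>UNIV. (Lam j i * C $ j * (Y $ i / C $ i)) powr (lam $ j $ i))))
     in (\<exists>!CY. sys (fst CY) (snd CY)) \<and>
        (\<forall>C Y. sys C Y \<longrightarrow>
           (\<forall>i. Y $ i / C $ i = e $ i) \<and>
           (\<chi> i. ln (C $ i)) = matrix_inv N *v (\<chi> i. ln (A $ i) + v $ i) \<and>
           (\<forall>i. ln (Y $ i) = ln (C $ i) + ln (e $ i)))"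
proof -
  define M where "M = (\<chi> i j. (if i = j then 1 else 0) - Lam i j :: real^'n^'n)"
  define e where "e = matrix_inv M *v (\<chi> i. 1)"
  define N where "N = (\<chi> i j. (if i = j then 1 else 0) - lam $ j $ i :: real^'n^'n)"
  define v where "v = (\<chi> i. - (varphi * psi $ i / (1 + varphi)) * ln (e $ i)
                   + (psi $ i / (1 + varphi)) * ln (Psi i)
                   + (\<Sum>j\<in>UNIV. lam $ j $ i * ln (Lam j i)))"
  define b where "b = (\<chi> i. ln (A $ i) + v $ i)"
  define sys where "sys = (\<lambda>(C::real^'n) (Y::real^'n).
                  (\<forall>i. C $ i > 0 \<and> Y $ i > 0) \<and>
                  (\<forall>i. Y $ i = C $ i + (\<Sum>j\<in>UNIV. Lam i j * (C $ i / C $ j) * Y $ j)) \<and>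
                  (\<forall>i. Y $ i = A $ i * (Psi i * (Y $ i / C $ i)) powr (psi $ i / (1 + varphi))
                        * (\<Prod>j\<in>UNIV. (Lam j i * C $ j * (Y $ i / C $ i)) powr (lam $ j $ i))))"
  have ep: "\<forall>i. e $ i > 0" using e_pos unfolding e_def M_def .
  have Me: "M *v e = (\<chi> i. 1)" using minv_solve[OF M_inv[folded M_def]] e_def by blast
  have sec: "(C $ i * e $ i = A $ i * (Psi i * e $ i) powr (psi $ i / (1 + varphi))
            * (\<Prod>j\<in>UNIV. (Lam j i * C $ j * e $ i) powr (lam $ j $ i)))
      \<longleftrightarrow> (N *v (\<chi> i. ln (C $ i))) $ i = b $ i"
    if C: "\<forall>i. C $ i > 0" for C :: "real^'n" and i
  proof -
    have "(N *v (\<chi> i. ln (C $ i))) $ i = ln (C $ i) - (\<Sum>j\<in>UNIV. lam $ j $ i * ln (C $ j))"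
      unfolding N_def using mv_delta[of "\<lambda>i j. lam $ j $ i" "\<chi> i. ln (C $ i)" i] by simp
    then show ?thesis
      unfolding b_def v_def
      using second_eq_iff[of "A $ i" "Psi i" "e $ i" "\<lambda>j. Lam j i" "\<lambda>j. C $ j" "psi $ i"
          "\<lambda>j. lam $ j $ i" varphi i]
        A_pos Psi_pos ep Lam_pos C sum_one varphi by simp
  qed
  have char: "sys C Y \<longleftrightarrow> (\<forall>i. C $ i > 0) \<and> Y = (\<chi> i. C $ i * e $ i)
                  \<and> N *v (\<chi> i. ln (C $ i)) = b" for C Y
  proof
    assume S: "sys C Y"
    have pos: "\<forall>i. C $ i > 0 \<and> Y $ i > 0"
      and f1: "\<forall>i. Y $ i = C $ i + (\<Sum>j\<in>UNIV. Lam i j * (C $ i / C $ j) * Y $ j)"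
      and f2: "\<forall>i. Y $ i = A $ i * (Psi i * (Y $ i / C $ i)) powr (psi $ i / (1 + varphi))
                        * (\<Prod>j\<in>UNIV. (Lam j i * C $ j * (Y $ i / C $ i)) powr (lam $ j $ i))"
      using S unfolding sys_def by blast+
    have C: "\<forall>i. C $ i > 0" using pos by blast
    have "M *v (\<chi> i. Y $ i / C $ i) = (\<chi> i. 1)"
      unfolding M_def by (rule first_eq_iff[OF C, THEN iffD1, OF f1])
    then have x: "(\<chi> i. Y $ i / C $ i) = e"
      using minv_solve[OF M_inv[folded M_def]] e_def by blast
    then have xi: "Y $ i / C $ i = e $ i" for i by (metis vec_lambda_beta)
    have Yi: "Y $ i = C $ i * e $ i" for i
    proof -
      have "C $ i > 0" using C by blast
      then show ?thesis using xi[of i] by (simp add: divide_eq_eq)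
    qed
    have Y: "Y = (\<chi> i. C $ i * e $ i)"
      using Yi by (simp add: vec_eq_iff)
    have "(N *v (\<chi> i. ln (C $ i))) $ i = b $ i" for i
    proof -
      have "Y $ i = A $ i * (Psi i * (Y $ i / C $ i)) powr (psi $ i / (1 + varphi))
                        * (\<Prod>j\<in>UNIV. (Lam j i * C $ j * (Y $ i / C $ i)) powr (lam $ j $ i))"
        using f2 by blast
      then have "C $ i * e $ i = A $ i * (Psi i * e $ i) powr (psi $ i / (1 + varphi))
            * (\<Prod>j\<in>UNIV. (Lam j i * C $ j * e $ i) powr (lam $ j $ i))"
        unfolding xi unfolding Yi .
      then show ?thesis using sec[OF C, of i] by blast
    qed
    then have "N *v (\<chi> i. ln (C $ i)) = b" by (simp add: vec_eq_iff)
    then show "(\<forall>i. C $ i > 0) \<and> Y = (\<chi> i. C $ i * e $ i) \<and> N *v (\<chi> i. ln (C $ i)) = b"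
      using C Y by blast
  next
    assume H: "(\<forall>i. C $ i > 0) \<and> Y = (\<chi> i. C $ i * e $ i) \<and> N *v (\<chi> i. ln (C $ i)) = b"
    then have C: "\<forall>i. C $ i > 0" and Y: "Y = (\<chi> i. C $ i * e $ i)"
      and Nb: "N *v (\<chi> i. ln (C $ i)) = b" by blast+
    have Yi: "Y $ i = C $ i * e $ i" for i using Y by simp
    have xi: "Y $ i / C $ i = e $ i" for i
    proof -
      have "C $ i > 0" using C by blast
      then show ?thesis unfolding Yi by simp
    qed
    have pos: "\<forall>i. C $ i > 0 \<and> Y $ i > 0"
    proof
      fix i
      have "C $ i > 0" "e $ i > 0" using C ep by blast+
      then show "C $ i > 0 \<and> Y $ i > 0" unfolding Yi by simp
    qed
    have x: "(\<chi> i. Y $ i / C $ i) = e" unfolding xi by simp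
    have f1: "\<forall>i. Y $ i = C $ i + (\<Sum>j\<in>UNIV. Lam i j * (C $ i / C $ j) * Y $ j)"
      by (rule first_eq_iff[OF C, THEN iffD2]) (simp only: x Me[unfolded M_def])
    have f2: "\<forall>i. Y $ i = A $ i * (Psi i * (Y $ i / C $ i)) powr (psi $ i / (1 + varphi))
                        * (\<Prod>j\<in>UNIV. (Lam j i * C $ j * (Y $ i / C $ i)) powr (lam $ j $ i))"
    proof
      fix i
      have "(N *v (\<chi> i. ln (C $ i))) $ i = b $ i" using Nb by simp
      then have "C $ i * e $ i = A $ i * (Psi i * e $ i) powr (psi $ i / (1 + varphi))
            * (\<Prod>j\<in>UNIV. (Lam j i * C $ j * e $ i) powr (lam $ j $ i))"
        using sec[OF C, of i] by blast
      then show "Y $ i = A $ i * (Psi i * (Y $ i / C $ i)) powr (psi $ i / (1 + varphi))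
                        * (\<Prod>j\<in>UNIV. (Lam j i * C $ j * (Y $ i / C $ i)) powr (lam $ j $ i))"
        unfolding xi unfolding Yi .
    qed
    show "sys C Y" unfolding sys_def using pos f1 f2 by blast
  qed
  define c where "c = matrix_inv N *v b"
  define C0 where "C0 = (\<chi> i. exp (c $ i))"
  define Y0 where "Y0 = (\<chi> i. C0 $ i * e $ i)"
  have lnC0: "(\<chi> i. ln (C0 $ i)) = c" unfolding C0_def by (simp add: vec_eq_iff)
  have Nc: "N *v c = b" using minv_solve[OF N_inv[folded N_def]] c_def by blast
  have S0: "sys C0 Y0" unfolding char using lnC0 Nc unfolding C0_def Y0_def by simp
  have uniq: "C = C0 \<and> Y = Y0" if "sys C Y" for C Y
  proof -
    have C: "\<forall>i. C $ i > 0" and Y: "Y = (\<chi> i. C $ i * e $ i)"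
      and Nb: "N *v (\<chi> i. ln (C $ i)) = b" using that char by auto
    have "(\<chi> i. ln (C $ i)) = c"
      using minv_solve[OF N_inv[folded N_def]] Nb c_def by blast
    then have "ln (C $ i) = c $ i" for i by (metis vec_lambda_beta)
    then have "C = C0" using C unfolding C0_def by (simp add: vec_eq_iff) (metis exp_ln)
    then show ?thesis using Y Y0_def by simp
  qed
  have ex1: "\<exists>!CY. sys (fst CY) (snd CY)"
  proof (rule ex1I[of _ "(C0, Y0)"])
    show "sys (fst (C0, Y0)) (snd (C0, Y0))" using S0 by simp
    fix CY assume "sys (fst CY) (snd CY)"
    then show "CY = (C0, Y0)" using uniq by (metis prod.collapse)
  qed
  have props: "\<forall>C Y. sys C Y \<longrightarrow>
           (\<forall>i. Y $ i / C $ i = e $ i) \<and>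
           (\<chi> i. ln (C $ i)) = matrix_inv N *v b \<and>
           (\<forall>i. ln (Y $ i) = ln (C $ i) + ln (e $ i))"
  proof (intro allI impI)
    fix C Y assume S: "sys C Y"
    have C: "\<forall>i. C $ i > 0" and Y: "Y = (\<chi> i. C $ i * e $ i)"
      and Nb: "N *v (\<chi> i. ln (C $ i)) = b" using S char by auto
    show "(\<forall>i. Y $ i / C $ i = e $ i) \<and>
           (\<chi> i. ln (C $ i)) = matrix_inv N *v b \<and>
           (\<forall>i. ln (Y $ i) = ln (C $ i) + ln (e $ i))"
    proof (intro conjI allI)
      fix i
      have ci: "C $ i > 0" "e $ i > 0" using C ep by blast+
      show "Y $ i / C $ i = e $ i" using ci Y by simp
      show "ln (Y $ i) = ln (C $ i) + ln (e $ i)" using ci Y by (simp add: ln_mult_pos)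
    next
      show "(\<chi> i. ln (C $ i)) = matrix_inv N *v b"
        using minv_solve[OF N_inv[folded N_def]] Nb by blast
    qed
  qed
  show ?thesis
    unfolding Let_def using conjI[OF ex1 props] unfolding e_def M_def N_def v_def b_def sys_def .
qed

theorem mainTheorem5:
  fixes varphi dbar :: real
    and psi taubar kappabar A :: "real^'n"
    and lam zetabar :: "real^'n^'n"
  assumes varphi: "varphi \<ge> 0"
    and psi_pos: "\<forall>i. psi $ i > 0"
    and lam_pos: "\<forall>i j. lam $ j $ i > 0"
    and sum_one: "\<forall>i. psi $ i + (\<Sum>j\<in>UNIV. lam $ j $ i) = 1"
    and dbar: "dbar \<ge> 0"
    and taubar: "\<forall>i. taubar $ i \<ge> 0"
    and dtau: "dbar * (MAX i\<in>UNIV. taubar $ i) < 1"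
    and zetabar: "\<forall>i j. zetabar $ j $ i \<ge> 0"
    and kappabar: "\<forall>i. kappabar $ i \<ge> 0"
    and A_pos: "\<forall>i. A $ i > 0"
    and M_inv: "invertible (\<chi> i j. (if i = j then 1 else 0)
                   - LambdaC lam dbar taubar zetabar kappabar i j)"
    and e_pos: "\<forall>i. (matrix_inv (\<chi> i j. (if i = j then 1 else 0)
                   - LambdaC lam dbar taubar zetabar kappabar i j) *v (\<chi> i. 1)) $ i > 0"
    and N_inv: "invertible (\<chi> i j. (if i = j then 1 else 0) - lam $ j $ i)"
  shows
    "let Psi = PsiC psi dbar taubar kappabar;
         Lam = LambdaC lam dbar taubar zetabar kappabar;
         e = matrix_inv (\<chi> i j. (if i = j then 1 else 0) - Lam i j) *v (\<chi> i. 1);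
         N = (\<chi> i j. (if i = j then 1 else 0) - lam $ j $ i :: real^'n^'n);
         v = (\<chi> i. - (varphi * psi $ i / (1 + varphi)) * ln (e $ i)
                   + (psi $ i / (1 + varphi)) * ln (Psi i)
                   + (\<Sum>j\<in>UNIV. lam $ j $ i * ln (Lam j i)));
         sys = (\<lambda>(C::real^'n) (Y::real^'n).
                  (\<forall>i. C $ i > 0 \<and> Y $ i > 0) \<and>
                  (\<forall>i. Y $ i = C $ i + (\<Sum>j\<in>UNIV. Lam i j * (C $ i / C $ j) * Y $ j)) \<and>
                  (\<forall>i. Y $ i = A $ i * (Psi i * (Y $ i / C $ i)) powr (psi $ i / (1 + varphi))
                        * (\<Prod>j\<in>UNIV. (Lam j i * C $ j * (Y $ i / C $ i)) powr (lam $ j $ i))))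
     in (\<exists>!CY. sys (fst CY) (snd CY)) \<and>
        (\<forall>C Y. sys C Y \<longrightarrow>
           (\<forall>i. Y $ i / C $ i = e $ i) \<and>
           (\<chi> i. ln (C $ i)) = matrix_inv N *v (\<chi> i. ln (A $ i) + v $ i) \<and>
           (\<forall>i. ln (Y $ i) = ln (C $ i) + ln (e $ i)))"
proof -
  have td: "taubar $ i * dbar < 1" for i
  proof -
    have "taubar $ i \<le> (MAX i\<in>UNIV. taubar $ i)" by simp
    then have "dbar * taubar $ i \<le> dbar * (MAX i\<in>UNIV. taubar $ i)"
      using dbar by (intro mult_left_mono) simp_all
    then show ?thesis using dtau by (simp add: mult.commute)
  qed
  have kp: "1 + kappabar $ i * dbar > 0" for i
    using kappabar dbar by (simp add: add_pos_nonneg)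
  have zp: "1 + zetabar $ j $ i * dbar > 0" for i j
    using zetabar dbar by (simp add: add_pos_nonneg)
  have Psi_pos: "\<forall>i. PsiC psi dbar taubar kappabar i > 0"
    unfolding PsiC_def using psi_pos td kp by (simp add: divide_pos_pos)
  have Lam_pos: "\<forall>i j. LambdaC lam dbar taubar zetabar kappabar i j > 0"
    unfolding LambdaC_def using lam_pos td kp zp by (simp add: divide_pos_pos)
  show ?thesis
    using core[OF varphi psi_pos lam_pos sum_one A_pos Psi_pos Lam_pos M_inv e_pos N_inv]
    unfolding Let_def .
qed

end
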